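(* Let $A,B,C\in\mathbb{C}$ with $B\neq C$, and let $A'$ be the reflection of $A$ in the line $BC$. Define points $W_{-1},W_0,\dots,W_5$ by $$W_{-1}=C,\quad W_0=B,\quad W_{k+1}=W_k+\rho^{-1}(W_{k-1}-W_k)\ (k\ge 0).$$ Then $W_0,\dots,W_5$ are the vertices of the regular hexagon on $BC$, in counterclockwise order, and $W_5=C$. Define $T_0=A$ and $T_{k+1}=W_k+\rho\,(T_k-W_k)$ for $k=0,\dots,4$. For $k=1,\dots,5$ let $F_k$ be the triangle with vertices $W_{k-1},T_k,W_k$, with base $W_{k-1}W_k$ and apex $T_k$. Then for every $k=1,\dots,5$, the reflection of the apex $T_k$ in the line $W_{k-1}W_k$ equals $A'$.
   Context: The plane is identified with $\mathbb{C}$, and $\rho=e^{2\pi i/3}$. Geometric meaning of the construction: - For counterclockwise $(A,B,C)$, the hexagon $W_0\cdots W_5$ is the regular hexagon $H_0$ erected outwardly on $BC$. - $F_1$ is the flank triangle at $B$ between $H_0$ and the hexagon erected on $AB$. - Each subsequent $F_{k+1}$ is the flank triangle at $W_k$ between $H_0$ and the regular hexagon erected on the side $W_kT_k$ of $F_k$. - $T_{k+1}$ is the vertex of that hexagon adjacent to $W_k$. *)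

theory Defs
  imports Complex_Main
begin

definition rho :: complex where "rho = cis (2 * pi / 3)"

text \<open>Shifted sequence: Wseq B C n = W_(n-1), so Wseq 0 = W_(-1) = C, Wseq 1 = W_0 = B.\<close>
fun Wseq :: "complex \<Rightarrow> complex \<Rightarrow> nat \<Rightarrow> complex" where
  "Wseq B C 0 = C"
| "Wseq B C (Suc 0) = B"
| "Wseq B C (Suc (Suc n)) =
     Wseq B C (Suc n) + inverse rho * (Wseq B C n - Wseq B C (Suc n))"

definition W :: "complex \<Rightarrow> complex \<Rightarrow> int \<Rightarrow> complex" where
  "W B C k = Wseq B C (nat (k + 1))"

fun T :: "complex \<Rightarrow> complex \<Rightarrow> complex \<Rightarrow> nat \<Rightarrow> complex" where
  "T A B C 0 = A"
| "T A B C (Suc k) = W B C (int k) + rho * (T A B C k - W B C (int k))"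

definition reflect_line :: "complex \<Rightarrow> complex \<Rightarrow> complex \<Rightarrow> complex" where
  "reflect_line P Q z = P + (Q - P) * cnj ((z - P) / (Q - P))"

definition regular_hexagon_ccw :: "(nat \<Rightarrow> complex) \<Rightarrow> bool" where
  "regular_hexagon_ccw P \<longleftrightarrow> P 1 \<noteq> P 0 \<and>
     (\<forall>k<6. P ((k + 1) mod 6) - P k = cis (pi / 3) ^ k * (P 1 - P 0))"

end

theory Submission
  imports Defs
begin

definition om :: complex where "om = cis (pi/3)"

lemma om_sq: "om * om = om - 1"
  by (simp add: om_def complex_eq_iff cos_60 sin_60 power2_eq_square)

lemma om_cnj: "cnj om = 1 - om"
  by (simp add: om_def complex_eq_iff cos_60 sin_60)

lemma rho_om: "rho = om - 1"
proof -
  have "rho = om * om" unfolding rho_def om_def by (simp add: cis_mult)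
  thus ?thesis using om_sq by simp
qed

lemma om_ne0: "om \<noteq> 0" by (simp add: om_def)
lemma om_ne1: "om \<noteq> 1" using om_sq by auto

lemma inv_rho: "inverse rho = - om"
proof -
  have "rho * (- om) = om - om * om" unfolding rho_om by (simp add: algebra_simps)
  also have "\<dots> = 1" unfolding om_sq by simp
  finally show ?thesis by (rule inverse_unique)
qed

lemma om3: "om ^ 3 = -1"
proof -
  have "om^3 = om * (om*om)" by (simp add: power3_eq_cube)
  also have "\<dots> = om * (om - 1)" using om_sq by simp
  also have "\<dots> = om*om - om" by (simp add: algebra_simps)
  finally show ?thesis using om_sq by simp
qed

lemma om_unit: "cnj (om ^ n) * om ^ n = 1"
proof -
  have "cnj om * om = om - om * om" unfolding om_cnj by (simp add: algebra_simps)
  hence "cnj om * om = 1" using om_sq by simp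
  hence "(cnj om * om)^n = 1" by simp
  thus ?thesis by (simp add: power_mult_distrib)
qed

lemma Wdiff: "Wseq B C (Suc n) - Wseq B C n = om ^ n * (B - C)"
proof (induction n rule: less_induct)
  case (less n)
  show ?case
  proof (cases n)
    case 0 thus ?thesis by simp
  next
    case (Suc m)
    have "Wseq B C (Suc (Suc m)) - Wseq B C (Suc m) = om * (Wseq B C (Suc m) - Wseq B C m)"
      using inv_rho by (simp add: algebra_simps)
    thus ?thesis using less[of m] Suc by simp
  qed
qed

lemma W_int: "W B C (int k) = Wseq B C (Suc k)"
  by (simp add: W_def nat_add_distrib)

lemma W_int1: "k \<ge> 1 \<Longrightarrow> W B C (int k - 1) = Wseq B C k"
  by (simp add: W_def)

lemma refl_alt: "reflect_line P Q z = P + (Q - P) * cnj (z - P) / cnj (Q - P)"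
  by (simp add: reflect_line_def complex_cnj_divide)

lemma regroup: "(p::complex) * q * (r * s) / (u * v) = (p * r / u) * (q * s / v)"
  by (simp add: divide_inverse mult_ac)

lemma neg_div: "(-(p::complex))*q/(-r) = p*q/r" by simp

lemma fac: "om * cnj rho / cnj om = 1"
proof -
  have c1: "cnj om \<noteq> 0" using om_ne0 by simp
  have cr: "cnj rho = - om" unfolding rho_om by (simp add: om_cnj)
  have "om * cnj rho = 1 - om" unfolding cr using om_sq by (simp add: algebra_simps)
  thus ?thesis using c1 om_cnj by simp
qed

lemma refl_inv:
  assumes "B \<noteq> C"
  shows "reflect_line (Wseq B C (Suc n)) (Wseq B C (Suc (Suc n))) (T A B C (Suc n)) = reflect_line B C A"
proof (induction n)
  case 0
  have d: "cnj (B - C) \<noteq> 0" using assms by simp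
  have b0: "Wseq B C (Suc (Suc 0)) - Wseq B C (Suc 0) = om ^ Suc 0 * (B - C)" by (rule Wdiff)
  have b: "Wseq B C (Suc (Suc 0)) - B = om * (B - C)"
    using b0 by (simp only: Wseq.simps(2) power_Suc power_0 mult_1_right)
  have t0: "T A B C (Suc 0) = W B C (int 0) + rho * (T A B C 0 - W B C (int 0))" by (rule T.simps(2))
  have t: "T A B C (Suc 0) - B = rho * (A - B)"
    unfolding t0 W_int Wseq.simps(2) T.simps(1) by (rule add_diff_cancel_left')
  have "reflect_line B (Wseq B C (Suc (Suc 0))) (T A B C (Suc 0)) = B + om * (B - C) * (cnj rho * cnj (A - B)) / (cnj om * cnj (B - C))"
    unfolding refl_alt b t by (simp only: complex_cnj_mult)
  also have "\<dots> = B + (om * cnj rho / cnj om) * ((B - C) * cnj (A - B) / cnj (B - C))"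
    by (rule arg_cong[where f="\<lambda>z. B + z"], rule regroup)
  also have "\<dots> = B + (C - B) * cnj (A - B) / cnj (C - B)"
  proof -
    have e1: "C - B = - (B - C)" by simp
    have e2: "cnj (C - B) = - cnj (B - C)" by simp
    show ?thesis unfolding fac e2 unfolding e1 by (simp only: neg_div mult_1)
  qed
  finally show ?case by (simp only: Wseq.simps(2) refl_alt[of B C A])
next
  case (Suc n)
  define a where "a = Wseq B C (Suc n)"
  define b where "b = Wseq B C (Suc (Suc n))"
  define t where "t = T A B C (Suc n)"
  define x where "x = om ^ Suc n"
  define d where "d = B - C"
  have d0: "cnj d \<noteq> 0" using assms by (simp add: d_def)
  have x1: "cnj x * x = 1" unfolding x_def by (rule om_unit)
  hence x0: "cnj x \<noteq> 0" by auto
  have bad: "b - a = x * d" unfolding a_def b_def x_def d_def by (rule Wdiff)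
  have ba: "b = a + x * d" using bad by (simp add: diff_eq_eq add.commute)
  have eb: "Wseq B C (Suc (Suc (Suc n))) - b = om * x * d"
    unfolding b_def x_def d_def Wdiff by (simp only: power_Suc)
  have tt0: "T A B C (Suc (Suc n)) = W B C (int (Suc n)) + rho * (T A B C (Suc n) - W B C (int (Suc n)))"
    by (rule T.simps(2))
  have tt: "T A B C (Suc (Suc n)) - b = rho * (t - b)"
    unfolding tt0 W_int b_def[symmetric] t_def[symmetric] by simp
  have IH: "a + x * d * cnj (t - a) / (cnj x * cnj d) = reflect_line B C A"
    using Suc.IH unfolding refl_alt a_def[symmetric] b_def[symmetric] t_def[symmetric] bad complex_cnj_mult .
  have key: "x * d * cnj (t - b) / (cnj x * cnj d) = x * d * cnj (t - a) / (cnj x * cnj d) - x * d"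
  proof -
    have ctb: "cnj (t - b) = cnj (t - a) - cnj x * cnj d" unfolding ba by simp
    have "x * d * cnj (t - b) = x * d * cnj (t - a) - (x * d) * (cnj x * cnj d)"
      unfolding ctb by (rule right_diff_distrib)
    thus ?thesis using d0 x0 by (simp add: diff_divide_distrib)
  qed
  have "reflect_line b (Wseq B C (Suc (Suc (Suc n)))) (T A B C (Suc (Suc n)))
      = b + om * x * d * (cnj rho * cnj (t - b)) / (cnj om * cnj x * cnj d)"
    unfolding refl_alt eb tt by (simp only: complex_cnj_mult)
  also have "\<dots> = b + (om * cnj rho / cnj om) * (x * d * cnj (t - b) / (cnj x * cnj d))"
    using regroup[of om "x*d" "cnj rho" "cnj (t-b)" "cnj om" "cnj x * cnj d"] by (simp only: mult.assoc)
  also have "\<dots> = b + x * d * cnj (t - b) / (cnj x * cnj d)"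
    unfolding fac by (rule arg_cong[where f="\<lambda>z. b + z"], rule mult_1)
  also have "\<dots> = b + (x * d * cnj (t - a) / (cnj x * cnj d) - x * d)"
    unfolding key ..
  also have "\<dots> = a + x * d * cnj (t - a) / (cnj x * cnj d)"
    unfolding ba by simp
  also have "\<dots> = reflect_line B C A" by (rule IH)
  finally show ?case unfolding b_def .
qed

theorem mainTheorem4:
  fixes A B C :: complex
  assumes "B \<noteq> C"
  shows "regular_hexagon_ccw (\<lambda>k. W B C (int k)) \<and> W B C 5 = C \<and>
         (\<forall>k::nat. 1 \<le> k \<and> k \<le> 5 \<longrightarrow>
            reflect_line (W B C (int k - 1)) (W B C (int k)) (T A B C k) = reflect_line B C A)"
proof -
  have W6: "Wseq B C 6 = C"
  proof -
    have "Wseq B C 6 = Wseq B C 0 + (\<Sum>j<6. Wseq B C (Suc j) - Wseq B C j)"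
      by (simp add: sum.lessThan_Suc numeral_eq_Suc)
    also have "\<dots> = C + (B - C) * (\<Sum>j<6. om ^ j)"
      by (simp add: Wdiff sum_distrib_left mult.commute)
    also have "(\<Sum>j<6::nat. om ^ j) = 0"
    proof -
      have "(\<Sum>j<6::nat. om ^ j) = 1 + om + om^2 + om^3 + om*om^3 + om^2 * om^3"
        by (simp add: sum.lessThan_Suc numeral_eq_Suc algebra_simps)
      also have "\<dots> = 0" using om3 om_sq by (simp add: power2_eq_square algebra_simps)
      finally show ?thesis .
    qed
    finally show ?thesis by simp
  qed
  have "om ^ 6 = (om^3)^2" by (simp flip: power_mult)
  hence om6: "om ^ 6 = 1" using om3 by simp
  have hex: "regular_hexagon_ccw (\<lambda>k. W B C (int k))"
    unfolding regular_hexagon_ccw_def W_int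
  proof (intro conjI allI impI)
    show "Wseq B C (Suc 1) \<noteq> Wseq B C (Suc 0)"
      using Wdiff[of B C 1] assms om_ne0 by auto
    fix k :: nat assume k: "k < 6"
    show "Wseq B C (Suc ((k + 1) mod 6)) - Wseq B C (Suc k) = cis (pi/3) ^ k * (Wseq B C (Suc 1) - Wseq B C (Suc 0))"
    proof (cases "k = 5")
      case True
      have "Wseq B C 1 - Wseq B C 6 = om^5 * (om * (B - C))"
        using W6 om6 by (simp add: mult.assoc[symmetric] power_Suc2[symmetric] del: power_Suc power_Suc2)
      thus ?thesis using True Wdiff[of B C 1] by (simp add: om_def)
    next
      case False
      hence "(k+1) mod 6 = k + 1" using k by simp
      thus ?thesis using Wdiff[of B C "Suc k"] Wdiff[of B C 1] by (simp add: om_def)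
    qed
  qed
  have W5: "W B C 5 = C" using W6 by (simp add: W_def)
  have "\<forall>k::nat. 1 \<le> k \<and> k \<le> 5 \<longrightarrow>
            reflect_line (W B C (int k - 1)) (W B C (int k)) (T A B C k) = reflect_line B C A"
  proof (intro allI impI)
    fix k :: nat assume "1 \<le> k \<and> k \<le> 5"
    then obtain n where n: "k = Suc n" by (cases k) auto
      have e: "W B C (int (Suc n) - 1) = Wseq B C (Suc n)" by (simp add: W_def nat_add_distrib)
      show "reflect_line (W B C (int k - 1)) (W B C (int k)) (T A B C k) = reflect_line B C A"
      unfolding n W_int e
      by (rule refl_inv[OF assms])
  qed
  thus ?thesis using hex W5 by blast
qed

end
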